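(* Let $h_1,h_2\in\mathbb{C}\setminus\{0\}$ with $|h_1|\le|h_2|$, deadlines $D_1<D_2$, minimum blocklength $\hat m>0$, power budget $P_{\max}>0$, packet sizes $N_1,N_2>0$ and error probabilities $\epsilon_1,\epsilon_2\in(0,1)$. For $k=1,2$ define, for $m>0,\gamma>0$, $$F_k(m,\gamma)=\sqrt{\frac{1}{m}\left(1-\frac{1}{(\gamma+1)^2}\right)}\,\frac{Q^{-1}(\epsilon_k)}{\ln 2}-\log_2(1+\gamma)+\frac{N_k}{m},$$ and let $\Gamma_k(m)$ denote the implicit function defined by $F_k(m,\Gamma_k(m))=0$, $\Gamma_k(m)>0$. Consider the problem $$\min_{\{m_k,p_k,\gamma_k\}_{k=1,2}} m_1p_1+m_2p_2$$ subject to $F_k(m_k,\gamma_k)=0$, $\hat m\le m_k\le D_k$, $p_k\ge0$ for $k=1,2$, $p_1+p_2\le P_{\max}$, $\gamma_1=\frac{p_1|h_1|^2}{p_2|h_1|^2+1}$, $\gamma_2=p_2|h_2|^2$. Suppose that $\frac{Q^{-1}(\epsilon_k)}{\sqrt{N_k}}\le \frac{2\sqrt{\ln 2}}{4-\sqrt2}=0.64394\ldots$ for $k=1,2$ and that the problem is feasible. Then an optimal solution is $$m_k^*=D_k,\quad \gamma_k^*=\Gamma_k(D_k)\ (k=1,2),\quad p_1^*=\frac{\gamma_1^*\gamma_2^*}{|h_2|^2}+\frac{\gamma_1^*}{|h_1|^2},\quad p_2^*=\frac{\gamma_2^*}{|h_2|^2}.$$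
   Context: $Q^{-1}$ is the inverse of the Gaussian Q-function. The setting is a two-user single-antenna downlink with superposition coding and unit noise variances; receiver 1 treats receiver 2's signal as noise and receiver 2 performs successive interference cancellation. Blocklengths $m_k$ are treated as continuous variables. The constraint $F_k(m_k,\gamma_k)=0$ is the finite-blocklength rate relation $\frac{N_k}{m_k}=\log_2(1+\gamma_k)-\sqrt{\frac{1}{m_k}\big(1-\frac{1}{(1+\gamma_k)^2}\big)}\frac{Q^{-1}(\epsilon_k)}{\ln2}$. *)

theory Defs
  imports "HOL-Probability.Probability"
begin

definition Qfun :: "real \<Rightarrow> real" where
  "Qfun x = (LINT t:{x<..}|lborel. std_normal_density t)"

definition Qinv :: "real \<Rightarrow> real" where
  "Qinv e = (THE x. Qfun x = e)"

definition Fk :: "real \<Rightarrow> real \<Rightarrow> real \<Rightarrow> real \<Rightarrow> real" where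
  "Fk N eps m \<gamma> =
     sqrt ((1 / m) * (1 - 1 / (\<gamma> + 1)^2)) * Qinv eps / ln 2 - log 2 (1 + \<gamma>) + N / m"

definition Gammak :: "real \<Rightarrow> real \<Rightarrow> real \<Rightarrow> real" where
  "Gammak N eps m = (THE \<gamma>. \<gamma> > 0 \<and> Fk N eps m \<gamma> = 0)"

definition feasible ::
  "complex \<Rightarrow> complex \<Rightarrow> real \<Rightarrow> real \<Rightarrow> real \<Rightarrow> real \<Rightarrow> real \<Rightarrow> real \<Rightarrow> real \<Rightarrow> real \<Rightarrow>
   real \<Rightarrow> real \<Rightarrow> real \<Rightarrow> real \<Rightarrow> real \<Rightarrow> real \<Rightarrow> bool" where
  "feasible h1 h2 D1 D2 mhat Pmax N1 N2 eps1 eps2 m1 p1 g1 m2 p2 g2 \<longleftrightarrow>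
     Fk N1 eps1 m1 g1 = 0 \<and> Fk N2 eps2 m2 g2 = 0 \<and>
     mhat \<le> m1 \<and> m1 \<le> D1 \<and> mhat \<le> m2 \<and> m2 \<le> D2 \<and>
     p1 \<ge> 0 \<and> p2 \<ge> 0 \<and> p1 + p2 \<le> Pmax \<and>
     g1 = p1 * (cmod h1)^2 / (p2 * (cmod h1)^2 + 1) \<and>
     g2 = p2 * (cmod h2)^2"

end

theory Submission
  imports Defs
begin

definition Vf :: "real \<Rightarrow> real" where "Vf x = 1 - 1/(1+x)^2"
definition Af :: "real \<Rightarrow> real" where "Af x = (2+x)/(1+x)^2"

lemma Vf_deriv: assumes "x > -1" shows "(Vf has_real_derivative 2/(1+x)^3) (at x)"
proof -
  have h: "1+x \<noteq> 0" using assms by simp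
  show ?thesis unfolding Vf_def
  apply (rule derivative_eq_intros refl | simp add: h)+
  by (simp add: field_simps h; algebra)
qed
lemma Af_deriv: assumes "x > -1" shows "(Af has_real_derivative -(x+3)/(1+x)^3) (at x)"
proof -
  have h: "1+x \<noteq> 0" using assms by simp
  show ?thesis unfolding Af_def
  apply (rule derivative_eq_intros refl | simp add: h)+
  by (simp add: field_simps h; algebra)
qed
lemma t1: assumes "(y::real) \<ge> 0" shows "((\<lambda>x. ln (1+x) - 2*x/(2+x)) has_real_derivative (1/(1+y) - 4/(2+y)^2)) (at y)"
proof -
  have h: "1+y \<noteq> 0" "2+y \<noteq> 0" "0 < 1+y" using assms by auto
  show ?thesis
  apply (rule derivative_eq_intros refl | simp add: h)+
  by (simp add: field_simps h; algebra)
qed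
lemma Af_pos: "x > -1 \<Longrightarrow> Af x > 0"
  unfolding Af_def by simp

lemma Vf_eq: assumes "x > -1" shows "Vf x = x * Af x"
proof -
  have h: "1+x \<noteq> 0" using assms by simp
  show ?thesis unfolding Vf_def Af_def by (simp add: field_simps h; algebra)
qed
lemma ln_lower: fixes x :: real assumes "0 \<le> x" shows "2*x/(2+x) \<le> ln (1+x)"
proof -
  have "(\<lambda>x. ln (1+x) - 2*x/(2+x)) 0 \<le> (\<lambda>x. ln (1+x) - 2*x/(2+x)) x"
  proof (rule DERIV_nonneg_imp_nondecreasing[OF assms])
    fix y :: real assume y: "0 \<le> y" "y \<le> x"
    have "((\<lambda>x. ln (1+x) - 2*x/(2+x)) has_real_derivative (1/(1+y) - 4/(2+y)^2)) (at y)"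
      using t1 y by simp
    moreover have "1/(1+y) - 4/(2+y)^2 = y^2/((1+y)*(2+y)^2)"
    proof -
      have g: "\<And>s t::real. s \<noteq> 0 \<Longrightarrow> t \<noteq> 0 \<Longrightarrow> s = 1+y \<Longrightarrow> t = 2+y \<Longrightarrow> 1/s - 4/t^2 = y^2/(s*t^2)"
      proof -
        fix s t :: real assume a: "s \<noteq> 0" "t \<noteq> 0" "s = 1+y" "t = 2+y"
        show "1/s - 4/t^2 = y^2/(s*t^2)"
          apply (simp add: field_simps a(1,2))
          using a(3,4) by algebra
      qed
      show ?thesis using g[of "1+y" "2+y"] y by simp
    qed
    moreover have "y^2/((1+y)*(2+y)^2) \<ge> 0" using y by simp
    ultimately show "\<exists>d. ((\<lambda>x. ln (1+x) - 2*x/(2+x)) has_real_derivative d) (at y) \<and> d \<ge> 0" by metis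
  qed
  thus ?thesis by simp
qed

definition Dn :: "real \<Rightarrow> real \<Rightarrow> real \<Rightarrow> real" where
  "Dn n q x = sqrt (q^2 * Vf x + 4*n*ln(1+x)) - q * sqrt (Vf x)"

lemma Vf_pos: assumes "x > 0" shows "Vf x > 0"
proof -
  have "(1+x)^2 > 1" using assms by (intro one_less_power) auto
  hence "1/(1+x)^2 < 1" by (simp add: divide_less_eq)
  thus ?thesis unfolding Vf_def by simp
qed

lemma Dn_deriv_pos:
  assumes n: "n > 0" and x: "x > 0"
  shows "\<exists>y. (Dn n q has_real_derivative y) (at x) \<and> y > 0"
proof -
  define V where "V = Vf x"
  define V' where "V' = 2/(1+x)^3"
  define L where "L = ln (1+x)"
  define b where "b = 1/(1+x)"
  define W where "W = q^2*V + 4*n*L"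
  have Vp: "V > 0" using Vf_pos[OF x] V_def by simp
  have Lp: "L > 0" using x L_def by simp
  have bp: "b > 0" using x b_def by simp
  have V'p: "V' > 0" using x V'_def by simp
  have Wp: "W > 0" using Vp Lp n W_def by (simp add: add_nonneg_pos)
  have dV: "(Vf has_real_derivative V') (at x)" using Vf_deriv x V'_def by simp
  have dL: "((\<lambda>x. ln (1+x)) has_real_derivative b) (at x)"
    using x b_def by (auto intro!: derivative_eq_intros)
  have dW: "((\<lambda>x. q^2 * Vf x + 4*n*ln(1+x)) has_real_derivative (q^2*V' + 4*n*b)) (at x)"
    using DERIV_add[OF DERIV_cmult[OF dV, of "q^2"] DERIV_cmult[OF dL, of "4*n"]] by simp
  have dsW: "((\<lambda>x. sqrt (q^2 * Vf x + 4*n*ln(1+x))) has_real_derivative (inverse (sqrt W)/2 * (q^2*V' + 4*n*b))) (at x)"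
    using DERIV_chain2[OF DERIV_real_sqrt dW] Wp W_def V_def L_def by simp
  have dsV: "((\<lambda>x. sqrt (Vf x)) has_real_derivative (inverse (sqrt V)/2 * V')) (at x)"
    using DERIV_chain2[OF DERIV_real_sqrt dV] Vp V_def by simp
  have dD: "(Dn n q has_real_derivative (inverse (sqrt W)/2 * (q^2*V' + 4*n*b) - q * (inverse (sqrt V)/2 * V'))) (at x)"
  proof -
    have "Dn n q = (\<lambda>x. sqrt (q^2 * Vf x + 4*n*ln(1+x)) - q * sqrt (Vf x))"
      by (rule ext) (simp add: Dn_def)
    thus ?thesis using DERIV_diff[OF dsW DERIV_cmult[OF dsV, of q]] by simp
  qed
  have pos: "inverse (sqrt W)/2 * (q^2*V' + 4*n*b) - q * (inverse (sqrt V)/2 * V') > 0"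
  proof (cases "q \<le> 0")
    case True
    have "inverse (sqrt W)/2 * (q^2*V' + 4*n*b) > 0"
      using Wp V'p n bp by (intro mult_pos_pos) (auto intro!: add_nonneg_pos)
    moreover have "q * (inverse (sqrt V)/2 * V') \<le> 0"
      using True Vp V'p by (intro mult_nonpos_nonneg) auto
    ultimately show ?thesis by linarith
  next
    case False
    hence q: "q > 0" by simp
    have "L \<le> x" using L_def x ln_add_one_self_le_self by simp
    hence "L \<le> (1+x)^2 - 1"
    proof -
      have "(1+x)^2 - 1 = x*x + 2*x" by (simp add: power2_eq_square algebra_simps)
      moreover have "x*x > 0" using x by simp
      ultimately show ?thesis using \<open>L \<le> x\<close> x by linarith
    qed
    hence "2*L/(1+x)^3 \<le> 2*((1+x)^2 - 1)/(1+x)^3" using x by (intro divide_right_mono) auto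
    moreover have "V'*L = 2*L/(1+x)^3" unfolding V'_def by simp
    moreover have "2*b*V = 2*((1+x)^2 - 1)/(1+x)^3"
    proof -
      have hx: "1+x \<noteq> 0" using x by simp
      show ?thesis unfolding b_def V_def Vf_def by (simp add: field_simps hx; algebra)
    qed
    ultimately have key: "V' * L \<le> 2 * b * V" by simp
    have sqW: "sqrt W ^ 2 = W" using Wp by simp
    have sqV: "sqrt V ^ 2 = V" using Vp by simp
    have "(q*V'* sqrt W)^2 < ((q^2*V' + 4*n*b)* sqrt V)^2"
    proof -
      have "(q*V'* sqrt W)^2 = q^2*V'^2*W" using sqW by (simp add: power_mult_distrib)
      moreover have "((q^2*V' + 4*n*b)* sqrt V)^2 = (q^2*V' + 4*n*b)^2*V" using sqV by (simp add: power_mult_distrib)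
      moreover have "(q^2*V' + 4*n*b)^2*V - q^2*V'^2*W = 4*n*q^2*V'*(2*b*V - V'*L) + 16*n^2*b^2*V"
        unfolding W_def by (simp add: power2_eq_square algebra_simps)
      moreover have "4*n*q^2*V'*(2*b*V - V'*L) \<ge> 0" using key n q V'p by simp
      moreover have "16*n^2*b^2*V > 0" using n bp Vp by simp
      ultimately show ?thesis by linarith
    qed
    hence lt: "q*V'* sqrt W < (q^2*V' + 4*n*b)* sqrt V"
      by (rule power2_less_imp_less) (use n bp V'p Vp q in \<open>auto intro!: mult_nonneg_nonneg add_nonneg_nonneg\<close>)
    have sWp: "sqrt W > 0" "sqrt V > 0" using Wp Vp by auto
    have "inverse (sqrt W)/2 * (q^2*V' + 4*n*b) - q * (inverse (sqrt V)/2 * V')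
          = ((q^2*V' + 4*n*b)* sqrt V - q*V'* sqrt W) / (2* sqrt W* sqrt V)"
      using sWp by (simp add: field_simps)
    also have "\<dots> > 0" using lt sWp by (intro divide_pos_pos) auto
    finally show ?thesis .
  qed
  show ?thesis using dD pos by blast
qed

lemma E1: assumes r: "(r::real) \<noteq> 0" and s: "s \<noteq> 0" shows "(q^2 * s^2 + 8 * n * r^2) / r ^ 4 =
     s / r^2 * (q^2 * (s / r^2) + 4 * n * (2 / s))"
  using r s by (simp add: field_simps; algebra)


lemma F3:
  fixes x n q :: real
  assumes x: "x > 0" and n: "n > 0" and q: "q > 0" and qn: "3*q^2 \<le> 2*n"
    and B: "B \<ge> 2/(2+x)"
  shows "q*(x+4)/(1+x)^2 \<le> sqrt (Af x * (q^2 * Af x + 4*n*B))"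
proof -
  define r where "r = 1+x"
  have r: "r > 1" using x r_def by simp
  have A: "Af x = (r+1)/r^2" unfolding Af_def r_def by simp
  have "q^2*(4*x+12) \<le> (2*n/3)*(4*x+12)" using qn x by (intro mult_right_mono) auto
  also have "\<dots> \<le> 8*n*r^2"
  proof -
    have "(2*n/3)*(4*x+12) = n*(8*x/3+8)" by (simp add: algebra_simps)
    moreover have "8*x/3 + 8 \<le> 8*r^2" using x unfolding r_def by (simp add: power2_eq_square algebra_simps)
    ultimately show ?thesis using n by simp
  qed
  finally have ineq: "q^2*(4*x+12) \<le> 8*n*r^2" .
  have "(q*(x+4)/(1+x)^2)^2 = q^2*(x+4)^2/r^4" unfolding r_def by (simp add: power_divide power_mult_distrib flip: power_mult)
  also have "\<dots> \<le> (q^2*(r+1)^2 + 8*n*r^2)/r^4"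
  proof (rule divide_right_mono)
    have "q^2*(x+4)^2 = q^2*(r+1)^2 + q^2*(4*x+12)" unfolding r_def by (simp add: power2_eq_square algebra_simps)
    thus "q^2*(x+4)^2 \<le> q^2*(r+1)^2 + 8*n*r^2" using ineq by linarith
  qed simp
  also have "\<dots> = Af x * (q^2 * Af x + 4*n*(2/(2+x)))"
  proof -
    have "2+x = r+1" unfolding r_def by simp
    have h: "r \<noteq> 0" "r+1 \<noteq> 0" using r by auto
    show ?thesis unfolding A \<open>2+x = r+1\<close> by (rule E1[OF h])
  qed
  also have "\<dots> \<le> Af x * (q^2 * Af x + 4*n*B)"
  proof -
    have "4*n*(2/(2+x)) \<le> 4*n*B" using B n by (intro mult_left_mono) auto
    thus ?thesis using Af_pos[of x] x by (intro mult_left_mono) auto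
  qed
  finally have "(q*(x+4)/(1+x)^2)^2 \<le> Af x * (q^2 * Af x + 4*n*B)" .
  hence "sqrt ((q*(x+4)/(1+x)^2)^2) \<le> sqrt (Af x * (q^2 * Af x + 4*n*B))" by (rule real_sqrt_le_mono)
  moreover have "q*(x+4)/(1+x)^2 \<ge> 0" using q x by simp
  ultimately show ?thesis by (simp only: real_sqrt_abs abs_of_nonneg)
qed

lemma id1: fixes x s t :: real
  assumes "x \<noteq> 0" "s \<noteq> 0" "t \<noteq> 0" "s = 1+x" "t = 2+x"
  shows "(2*x/t)/x^2 - 1/(x * s) = 1/(t * s)"
  apply (simp add: field_simps assms(1-3))
  using assms(4,5) by algebra

lemma key:
  fixes x n q :: real
  assumes x: "x > 0" and n: "n > 0" and q: "q > 0" and qn: "3*q^2 \<le> 2*n"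
  shows "q * ((x+3)/(1+x)^3) * (ln(1+x)/x) \<le>
     (ln(1+x)/x^2 - 1/(x*(1+x))) * (sqrt (Af x * (q^2 * Af x + 4*n*(ln(1+x)/x))) + q * Af x)"
proof -
  define L where "L = ln(1+x)"
  define A where "A = Af x"
  define a where "a = (x+3)/(1+x)^3"
  define S where "S = sqrt (Af x * (q^2 * Af x + 4*n*(L/x)))"
  define l0 where "l0 = 2*x/(2+x)"
  define d where "d = L - l0"
  have d0: "d \<ge> 0" using ln_lower[of x] x unfolding d_def l0_def L_def by simp
  have Apos: "A > 0" using Af_pos[of x] x A_def by simp
  have Lx: "L/x \<ge> 0" using x L_def by simp
  have "q^2 * Af x + 4*n*(L/x) \<ge> 0" using Apos A_def n Lx by (intro add_nonneg_nonneg mult_nonneg_nonneg) (auto simp del: zero_le_divide_iff)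
  hence S0: "S \<ge> 0" unfolding S_def using Apos A_def by simp
  have F1: "L/x^2 - 1/(x*(1+x)) = 1/((2+x)*(1+x)) + d/x^2"
  proof -
    have "l0/x^2 - 1/(x*(1+x)) = 1/((2+x)*(1+x))"
      unfolding l0_def using id1[of x "1+x" "2+x"] x by simp
    thus ?thesis unfolding d_def by (simp add: diff_divide_distrib)
  qed
  have F2: "L/x = 2/(2+x) + d/x"
  proof -
    have "l0/x = 2/(2+x)" unfolding l0_def using x by simp
    thus ?thesis unfolding d_def by (simp add: diff_divide_distrib)
  qed
  have F3': "q*(x+4)/(1+x)^2 \<le> S"
    unfolding S_def using F3[OF x n q qn, of "L/x"] F2 d0 x by simp
  have F4: "a*x \<le> A"
  proof -
    have "a*x = x*(x+3)/(1+x)^3" unfolding a_def by simp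
    also have "\<dots> \<le> (2+x)*(1+x)/(1+x)^3"
      using x by (intro divide_right_mono) (auto simp: algebra_simps)
    also have "\<dots> = A" unfolding A_def Af_def using x by (simp add: power2_eq_square power3_eq_cube)
    finally show ?thesis .
  qed
  have i: "q*a*(2/(2+x)) \<le> (S + q*A) * (1/((2+x)*(1+x)))"
  proof -
    have "2*q*a*(1+x) = q*(2*x+6)/(1+x)^2"
    proof -
      have h: "1+x \<noteq> 0" using x by simp
      show ?thesis unfolding a_def by (simp add: field_simps h; algebra)
    qed
    also have "\<dots> = q*(x+4)/(1+x)^2 + q*A"
      unfolding A_def Af_def by (simp add: add_divide_distrib[symmetric] algebra_simps)
    also have "\<dots> \<le> S + q*A" using F3' by simp
    finally have "2*q*a*(1+x) \<le> S + q*A" .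
    hence "2*q*a*(1+x)/((2+x)*(1+x)) \<le> (S + q*A)/((2+x)*(1+x))"
      using x by (intro divide_right_mono) auto
    moreover have "2*q*a*(1+x)/((2+x)*(1+x)) = (2*q*a)/(2+x)"
      using nonzero_mult_divide_mult_cancel_right[of "1+x" "2*q*a" "2+x"] x by simp
    moreover have "q*a*(2/(2+x)) = (2*q*a)/(2+x)" by simp
    ultimately show ?thesis by (metis mult.right_neutral times_divide_eq_right)
  qed
  have ii: "q*a*(d/x) \<le> (S + q*A) * (d/x^2)"
  proof -
    have "q*a*(d/x) = (q*(a*x))*(d/x^2)" using x by (simp add: power2_eq_square)
    also have "\<dots> \<le> (q*A)*(d/x^2)" using F4 q d0 x by (intro mult_right_mono mult_left_mono) auto
    also have "\<dots> \<le> (S + q*A)*(d/x^2)" using S0 d0 x by (intro mult_right_mono) auto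
    finally show ?thesis .
  qed
  have "q*a*(L/x) = q*a*(2/(2+x)) + q*a*(d/x)" unfolding F2 by (simp add: algebra_simps)
  also have "\<dots> \<le> (S + q*A) * (1/((2+x)*(1+x))) + (S + q*A) * (d/x^2)" using i ii by linarith
  also have "\<dots> = (L/x^2 - 1/(x*(1+x))) * (S + q*A)" unfolding F1 by (simp add: algebra_simps)
  finally show ?thesis unfolding L_def a_def S_def A_def .
qed

definition Kf :: "real \<Rightarrow> real \<Rightarrow> real \<Rightarrow> real" where
  "Kf n q x = sqrt (q^2 * Af x + 4*n*(ln(1+x)/x)) - q * sqrt (Af x)"

lemma B_deriv: assumes x: "x > 0"
  shows "((\<lambda>x. ln(1+x)/x) has_real_derivative -(ln(1+x)/x^2 - 1/(x*(1+x)))) (at x)"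
proof -
  have h: "x \<noteq> 0" "1+x \<noteq> 0" "0 < 1+x" using x by auto
  show ?thesis
    apply (rule derivative_eq_intros refl | simp add: h)+
  proof -
    have g: "\<And>s L. s \<noteq> 0 \<Longrightarrow> (x/s - L)/(x*x) = 1/(x * s) - L/x^2"
      using h by (simp add: field_simps power2_eq_square)
    show "(x / (1 + x) - ln (1 + x)) / (x * x) = 1 / (x * (1 + x)) - ln (1 + x) / x\<^sup>2"
      by (rule g) (simp add: h)
  qed
qed

lemma bb_pos: fixes x :: real assumes x: "x > 0" shows "ln(1+x)/x^2 - 1/(x*(1+x)) > 0"
proof -
  have "2*x/(2+x)/x^2 - 1/(x*(1+x)) = 1/((2+x)*(1+x))"
    using id1[of x "1+x" "2+x"] x by simp
  moreover have "2*x/(2+x)/x^2 \<le> ln(1+x)/x^2"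
    using ln_lower[of x] x by (intro divide_right_mono) auto
  moreover have "1/((2+x)*(1+x)) > 0" using x by simp
  ultimately show ?thesis by linarith
qed

lemma Kf_deriv_nonpos:
  assumes n: "n > 0" and x: "x > 0" and qc: "q \<le> 0 \<or> 3*q^2 \<le> 2*n"
  shows "\<exists>y. (Kf n q has_real_derivative y) (at x) \<and> y \<le> 0"
proof -
  define A where "A = Af x"
  define a where "a = (x+3)/(1+x)^3"
  define B where "B = ln(1+x)/x"
  define bb where "bb = ln(1+x)/x^2 - 1/(x*(1+x))"
  define Z where "Z = q^2*A + 4*n*B"
  have Ap: "A > 0" using Af_pos[of x] x A_def by simp
  have ap: "a > 0" using x a_def by simp
  have Bp: "B > 0" using x B_def by simp
  have bbp: "bb > 0" using bb_pos[OF x] bb_def by simp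
  have Zp: "Z > 0" unfolding Z_def using Ap Bp n by (intro add_nonneg_pos) auto
  have dA: "(Af has_real_derivative -a) (at x)" using Af_deriv[of x] x unfolding a_def minus_divide_left by simp
  have dB: "((\<lambda>x. ln(1+x)/x) has_real_derivative -bb) (at x)" using B_deriv[OF x] bb_def by simp
  have dZ: "((\<lambda>x. q^2 * Af x + 4*n*(ln(1+x)/x)) has_real_derivative (q^2*(-a) + 4*n*(-bb))) (at x)"
    using DERIV_add[OF DERIV_cmult[OF dA, of "q^2"] DERIV_cmult[OF dB, of "4*n"]] by simp
  have dsZ: "((\<lambda>x. sqrt (q^2 * Af x + 4*n*(ln(1+x)/x))) has_real_derivative (inverse (sqrt Z)/2 * (q^2*(-a) + 4*n*(-bb)))) (at x)"
    using DERIV_chain2[OF DERIV_real_sqrt dZ] Zp Z_def A_def B_def by simp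
  have dsA: "((\<lambda>x. sqrt (Af x)) has_real_derivative (inverse (sqrt A)/2 * (-a))) (at x)"
    using DERIV_chain2[OF DERIV_real_sqrt dA] Ap A_def by simp
  have dK: "(Kf n q has_real_derivative (inverse (sqrt Z)/2 * (q^2*(-a) + 4*n*(-bb)) - q * (inverse (sqrt A)/2 * (-a)))) (at x)"
  proof -
    have "Kf n q = (\<lambda>x. sqrt (q^2 * Af x + 4*n*(ln(1+x)/x)) - q * sqrt (Af x))"
      by (rule ext) (simp add: Kf_def)
    thus ?thesis using DERIV_diff[OF dsZ DERIV_cmult[OF dsA, of q]] by simp
  qed
  have sp: "sqrt Z > 0" "sqrt A > 0" using Zp Ap by auto
  have main: "q*a* sqrt Z \<le> (q^2*a + 4*n*bb)* sqrt A"
  proof (cases "q \<le> 0")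
    case True
    have "q*a* sqrt Z \<le> 0" using True ap sp by (simp add: mult_nonpos_nonneg)
    moreover have "(q^2*a + 4*n*bb)* sqrt A \<ge> 0" using ap bbp n sp by simp
    ultimately show ?thesis by linarith
  next
    case False
    hence q: "q > 0" by simp
    hence qn: "3*q^2 \<le> 2*n" using qc by auto
    define S where "S = sqrt (A*Z)"
    have SS: "S = sqrt A * sqrt Z" unfolding S_def by (simp add: real_sqrt_mult)
    have k: "q*a*B \<le> bb*(S + q*A)"
      using key[OF x n q qn] unfolding S_def Z_def A_def a_def B_def bb_def by simp
    have "S^2 = A*Z" unfolding S_def using Ap Zp by simp
    hence S2: "S^2 = q^2*A^2 + 4*n*A*B" unfolding Z_def
      by (simp add: power2_eq_square algebra_simps)
    have "S > 0" using SS sp by simp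
    hence Sp: "S + q*A > 0" using q Ap by (simp add: add_pos_pos)
    have "q*a*(S - q*A)*(S + q*A) = 4*n*A*(q*a*B)"
      using S2 by algebra
    also have "\<dots> \<le> 4*n*A*(bb*(S + q*A))" using k n Ap by simp
    finally have "q*a*(S - q*A)*(S + q*A) \<le> (4*n*A*bb)*(S + q*A)" by (simp add: mult_ac)
    hence "q*a*(S - q*A) \<le> 4*n*A*bb" using Sp by simp
    hence "q*a*S \<le> (q^2*a + 4*n*bb)*A" by (simp add: power2_eq_square algebra_simps)
    moreover have "q*a*S = (q*a* sqrt Z)* sqrt A" unfolding SS by (simp add: mult_ac)
    moreover have "(q^2*a + 4*n*bb)*A = ((q^2*a + 4*n*bb)* sqrt A)* sqrt A" using Ap by (simp add: mult.assoc)
    ultimately have "(q*a* sqrt Z)* sqrt A \<le> ((q^2*a + 4*n*bb)* sqrt A)* sqrt A" by simp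
    thus ?thesis using mult_right_le_imp_le sp(2) by blast
  qed
  have "inverse (sqrt Z)/2 * (q^2*(-a) + 4*n*(-bb)) - q * (inverse (sqrt A)/2 * (-a))
      = (q*a* sqrt Z - (q^2*a + 4*n*bb)* sqrt A)/(2* sqrt Z* sqrt A)"
    using sp by (simp add: field_simps)
  also have "\<dots> \<le> 0" using main sp by (intro divide_nonpos_pos) auto
  finally show ?thesis using dK by blast
qed

lemma Dn_strict: assumes n: "n > 0" and x: "0 < x" and xy: "x < y" shows "Dn n q x < Dn n q y"
  by (rule DERIV_pos_imp_increasing[OF xy]) (use Dn_deriv_pos[OF n] x in auto)

lemma Kf_anti: assumes n: "n > 0" and qc: "q \<le> 0 \<or> 3*q^2 \<le> 2*n" and x: "0 < x" and xy: "x \<le> y"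
  shows "Kf n q y \<le> Kf n q x"
  by (rule DERIV_nonpos_imp_nonincreasing[OF xy]) (use Kf_deriv_nonpos[OF n _ qc] x in auto)

lemma Dn_Kf: assumes x: "x > 0" shows "Dn n q x = Kf n q x * sqrt x"
proof -
  have V: "Vf x = x * Af x" using Vf_eq[of x] x by simp
  have "q^2 * Vf x + 4*n*ln(1+x) = x * (q^2 * Af x + 4*n*(ln(1+x)/x))"
    unfolding V using x by (simp add: algebra_simps)
  hence "sqrt (q^2 * Vf x + 4*n*ln(1+x)) = sqrt x * sqrt (q^2 * Af x + 4*n*(ln(1+x)/x))"
    by (simp add: real_sqrt_mult)
  moreover have "sqrt (Vf x) = sqrt x * sqrt (Af x)" unfolding V by (simp add: real_sqrt_mult)
  ultimately show ?thesis unfolding Dn_def Kf_def by (simp add: algebra_simps)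
qed

lemma Dn_pos: assumes n: "n > 0" and x: "x > 0" shows "Dn n q x > 0"
proof -
  have Vp: "Vf x > 0" using Vf_pos[OF x] .
  have "q^2 * Vf x < q^2 * Vf x + 4*n*ln(1+x)" using n x by simp
  hence "sqrt (q^2 * Vf x) < sqrt (q^2 * Vf x + 4*n*ln(1+x))" by (rule real_sqrt_less_mono)
  moreover have "sqrt (q^2 * Vf x) = \<bar>q\<bar> * sqrt (Vf x)" by (simp add: real_sqrt_mult)
  moreover have "q * sqrt (Vf x) \<le> \<bar>q\<bar> * sqrt (Vf x)" using Vp by (intro mult_right_mono) auto
  ultimately show ?thesis unfolding Dn_def by linarith
qed

lemma Dn0: "Dn n q 0 = 0" unfolding Dn_def Vf_def by simp

lemma Dn_cont: assumes "b \<ge> 0" shows "continuous_on {0..b} (Dn n q)"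
proof -
  have "Dn n q = (\<lambda>x. sqrt (q^2 * (1 - 1/(1+x)^2) + 4*n*ln(1+x)) - q * sqrt (1 - 1/(1+x)^2))"
    by (rule ext) (simp add: Dn_def Vf_def)
  moreover have "continuous_on {0..b} (\<lambda>x. sqrt (q^2 * (1 - 1/(1+x)^2) + 4*n*ln(1+x)) - q * sqrt (1 - 1/(1+x)^2))"
    by (intro continuous_intros) auto
  ultimately show ?thesis by simp
qed

lemma root_iff:
  assumes n: "n > 0" and m: "m > 0" and x: "x > 0"
  shows "(m*ln(1+x) - q * sqrt m * sqrt (Vf x) = n) \<longleftrightarrow> (sqrt m * Dn n q x = 2*n)"
proof -
  define u where "u = sqrt m"
  define L where "L = ln(1+x)"
  define s where "s = sqrt (Vf x)"
  define R where "R = sqrt (q^2 * Vf x + 4*n*L)"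
  have up: "u > 0" using m u_def by simp
  have mu: "m = u^2" using m u_def by simp
  have Lp: "L > 0" using x L_def by simp
  have sp: "s > 0" using Vf_pos[OF x] s_def by simp
  have ss: "Vf x = s^2" using Vf_pos[OF x] s_def by simp
  have Rnn: "q^2 * Vf x + 4*n*L > 0" using n Lp Vf_pos[OF x] by (simp add: add_nonneg_pos)
  have RR0: "R^2 = q^2 * Vf x + 4*n*L" unfolding R_def by (rule real_sqrt_pow2[OF less_imp_le[OF Rnn]])
  have RR: "R^2 = q^2 * s^2 + 4*n*L" using RR0 ss by simp
  have R0: "R \<ge> 0" unfolding R_def using Rnn by simp
  have D: "Dn n q x = R - q* s" unfolding Dn_def R_def s_def L_def by simp
  have e: "m*ln(1+x) - q * sqrt m * sqrt (Vf x) = L*u^2 - q* s*u"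
    unfolding L_def s_def u_def using m by (simp add: mult_ac)
  have Dp: "R - q* s > 0" using Dn_pos[OF n x, of q] D by simp
  show ?thesis
  proof
    assume h: "m*ln(1+x) - q * sqrt m * sqrt (Vf x) = n"
    hence h': "L*u^2 - q* s*u = n" using e by simp
    have "u*(L*u - q* s) > 0" using h' n by (simp add: power2_eq_square algebra_simps)
    hence "L*u - q* s > 0" using up by (simp add: zero_less_mult_iff)
    moreover have "L*u > 0" using Lp up by simp
    ultimately have pos: "2*L*u - q* s > 0" by linarith
    have "(2*L*u - q* s)^2 = 4*L*(L*u^2 - q* s*u) + q^2 * s^2" by (simp add: power2_eq_square algebra_simps)
    also have "\<dots> = R^2" unfolding h' RR by (simp add: algebra_simps)
    finally have "(2*L*u - q* s)^2 = R^2" .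
    hence RL: "2*L*u - q* s = R" using pos R0 by (simp add: power2_eq_iff_nonneg)
    have "u*(R - q* s) = 2*(L*u^2 - q* s*u)" unfolding RL[symmetric] by (simp add: power2_eq_square algebra_simps)
    hence "u*(R - q* s) = 2*n" using h' by simp
    thus "sqrt m * Dn n q x = 2*n" using D u_def by simp
  next
    assume h: "sqrt m * Dn n q x = 2*n"
    hence h': "u*(R - q* s) = 2*n" using D u_def by simp
    have "(R - q* s)*(R + q* s) = R^2 - q^2 * s^2" by (simp add: power2_eq_square algebra_simps)
    hence pr: "(R - q* s)*(R + q* s) = 4*n*L" using RR by simp
    have "u*(4*n*L) = (u*(R - q* s))*(R + q* s)" unfolding pr[symmetric] by (simp add: mult_ac)
    also have "\<dots> = 2*n*(R + q* s)" using h' by simp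
    finally have "2*n*(2*L*u) = 2*n*(R + q* s)" by (simp add: algebra_simps)
    hence e2: "2*L*u = R + q* s" using n by simp
    have "4*L*(L*u^2 - q* s*u) = (2*L*u)^2 - 2*q* s*(2*L*u)" by (simp add: power2_eq_square algebra_simps)
    also have "\<dots> = (R + q* s)^2 - 2*q* s*(R + q* s)" unfolding e2 ..
    also have "\<dots> = R^2 - q^2 * s^2" by (simp add: power2_eq_square algebra_simps)
    also have "\<dots> = 4*L*n" using RR by simp
    finally have "L*u^2 - q* s*u = n" using Lp by simp
    thus "m*ln(1+x) - q * sqrt m * sqrt (Vf x) = n" using e by simp
  qed
qed

lemma Fk_iff:
  assumes m: "m > 0" and x: "x \<ge> 0"
  shows "Fk N eps m x = 0 \<longleftrightarrow> m*ln(1+x) - Qinv eps * sqrt m * sqrt (Vf x) = N * ln 2"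
proof -
  define q where "q = Qinv eps"
  have "Fk N eps m x = sqrt (Vf x) / sqrt m * q / ln 2 - ln(1+x)/ln 2 + N/m"
    unfolding Fk_def Vf_def q_def log_def by (simp add: real_sqrt_divide add.commute)
  also have "\<dots> = (N * ln 2 - (m*ln(1+x) - q * sqrt m * sqrt (Vf x))) / (m * ln 2)"
  proof -
    have sm: "sqrt m * sqrt m = m" using m by simp
    have "sqrt m > 0" using m by simp
    thus ?thesis using m sm by (simp add: field_simps)
  qed
  finally show ?thesis using m q_def by auto
qed

lemma cond_q:
  assumes N: "N > 0" and c: "Qinv eps / sqrt N \<le> 2 * sqrt (ln 2) / (4 - sqrt 2)"
  shows "Qinv eps \<le> 0 \<or> 3 * (Qinv eps)^2 \<le> 2 * (N * ln 2)"
proof (cases "Qinv eps \<le> 0")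
  case False
  define q where "q = Qinv eps"
  have q: "q > 0" using False q_def by simp
  have s2: "sqrt 2 < 3/2"
    by (rule real_less_lsqrt) (auto simp: power2_eq_square)
  have den: "4 - sqrt 2 > 0" using s2 by simp
  have sN: "sqrt N > 0" using N by simp
  have "q \<le> 2 * sqrt (ln 2) / (4 - sqrt 2) * sqrt N"
    using c sN q_def by (simp add: divide_le_eq)
  hence "q^2 \<le> (2 * sqrt (ln 2) / (4 - sqrt 2) * sqrt N)^2"
    using q by (intro power_mono) auto
  also have "\<dots> = 4 * ln 2 * N / (4 - sqrt 2)^2"
    using N by (simp add: power_mult_distrib power_divide)
  finally have "3*q^2 \<le> 12 * ln 2 * N / (4 - sqrt 2)^2" by simp
  also have "\<dots> \<le> 2 * (N * ln 2)"
  proof -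
    have "(4 - sqrt 2)^2 = 18 - 8 * sqrt 2" by (simp add: power2_eq_square algebra_simps)
    hence "(4 - sqrt 2)^2 \<ge> 6" using s2 by simp
    hence "12 * ln 2 * N / (4 - sqrt 2)^2 \<le> 12 * ln 2 * N / 6"
      using N by (intro divide_left_mono) auto
    thus ?thesis by simp
  qed
  finally show ?thesis using q_def by simp
qed simp

lemma root_Fk:
  assumes N: "N > 0" and m: "m > 0" and x: "x > 0"
  shows "Fk N eps m x = 0 \<longleftrightarrow> sqrt m * Dn (N * ln 2) (Qinv eps) x = 2 * (N * ln 2)"
proof -
  have n: "N * ln 2 > 0" using N by simp
  show ?thesis using Fk_iff[OF m, of x N eps] root_iff[OF n m x, of "Qinv eps"] x by simp
qed

lemma Gammak_eq:
  assumes N: "N > 0" and m: "m > 0" and x: "x > 0" and F: "Fk N eps m x = 0"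
  shows "Gammak N eps m = x"
  unfolding Gammak_def
proof (rule the_equality)
  show "0 < x \<and> Fk N eps m x = 0" using x F by simp
next
  fix y assume y: "0 < y \<and> Fk N eps m y = 0"
  define n where "n = N * ln 2"
  have n: "n > 0" using N n_def by simp
  have "sqrt m * Dn n (Qinv eps) y = sqrt m * Dn n (Qinv eps) x"
    using root_Fk[OF N m x, of eps] root_Fk[OF N m, of y eps] y F n_def by simp
  hence eq: "Dn n (Qinv eps) y = Dn n (Qinv eps) x" using m by simp
  show "y = x"
  proof (rule ccontr)
    assume "y \<noteq> x"
    hence "y < x \<or> x < y" by auto
    thus False using Dn_strict[OF n, of y x "Qinv eps"] Dn_strict[OF n, of x y "Qinv eps"] x y eq by auto
  qed
qed

lemma Fk0: assumes "m > 0" "N > 0" shows "Fk N eps m 0 \<noteq> 0"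
  using assms unfolding Fk_def by simp

lemma user:
  assumes N: "N > 0" and c: "Qinv eps / sqrt N \<le> 2 * sqrt (ln 2) / (4 - sqrt 2)"
    and m': "m' > 0" "m' \<le> D" and g'0: "g' \<ge> 0" and F: "Fk N eps m' g' = 0"
  shows "Gammak N eps D > 0 \<and> Fk N eps D (Gammak N eps D) = 0 \<and> Gammak N eps D \<le> g'
         \<and> D * Gammak N eps D \<le> m' * g'"
proof -
  define n where "n = N * ln 2"
  define q where "q = Qinv eps"
  have n: "n > 0" using N n_def by simp
  have qc: "q \<le> 0 \<or> 3*q^2 \<le> 2*n" using cond_q[OF N c] q_def n_def by simp
  have g': "g' > 0" using g'0 F Fk0[OF m'(1) N, of eps] by (cases "g' = 0") auto
  have D: "D > 0" using m' by simp
  have r': "sqrt m' * Dn n q g' = 2*n" using root_Fk[OF N m'(1) g'] F n_def q_def by simp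
  define c0 where "c0 = 2*n / sqrt D"
  have c0p: "c0 > 0" using n D c0_def by simp
  have Dg': "Dn n q g' = 2*n / sqrt m'" using r' m' by (simp add: field_simps)
  have "c0 \<le> Dn n q g'" unfolding Dg' c0_def using n m' by (intro divide_left_mono) auto
  moreover have "Dn n q 0 \<le> c0" using Dn0 c0p by simp
  ultimately obtain x where x: "0 \<le> x" "x \<le> g'" "Dn n q x = c0"
    using IVT'[of "Dn n q" 0 c0 g'] Dn_cont[OF g'0] g'0 by auto
  have xp: "x > 0" using x c0p Dn0[of n q] by (cases "x = 0") auto
  have rx: "sqrt D * Dn n q x = 2*n" using x(3) c0_def D by simp
  have Fx: "Fk N eps D x = 0" using root_Fk[OF N D xp, of eps] rx n_def q_def by simp
  have G: "Gammak N eps D = x" by (rule Gammak_eq[OF N D xp Fx])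
  have ex: "D * x * (Kf n q x)^2 = 4*n^2"
  proof -
    have "(sqrt D * Dn n q x)^2 = (2*n)^2" using rx by simp
    thus ?thesis using Dn_Kf[OF xp, of n q] D xp by (simp add: power_mult_distrib mult_ac)
  qed
  have eg: "m' * g' * (Kf n q g')^2 = 4*n^2"
  proof -
    have "(sqrt m' * Dn n q g')^2 = (2*n)^2" using r' by simp
    thus ?thesis using Dn_Kf[OF g', of n q] m' g' by (simp add: power_mult_distrib mult_ac)
  qed
  have Kg: "Kf n q g' > 0"
  proof -
    have "Dn n q g' > 0" by (rule Dn_pos[OF n g'])
    thus ?thesis using Dn_Kf[OF g', of n q] g' by (simp add: zero_less_mult_iff)
  qed
  have Kx: "Kf n q g' \<le> Kf n q x" by (rule Kf_anti[OF n qc xp x(2)])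
  have "(Kf n q g')^2 \<le> (Kf n q x)^2" using Kg Kx by (intro power_mono) auto
  hence "D * x * (Kf n q g')^2 \<le> D * x * (Kf n q x)^2" using D xp by (intro mult_left_mono) auto
  also have "\<dots> = m' * g' * (Kf n q g')^2" using ex eg by simp
  finally have "D * x \<le> m' * g'" using Kg by simp
  thus ?thesis using G xp Fx x by simp
qed

lemma feas_p:
  fixes c1 c2 p1 p2 g1 g2 :: real
  assumes c1: "c1 > 0" and c2: "c2 > 0" and p: "p1 \<ge> 0" "p2 \<ge> 0"
    and g1: "g1 = p1 * c1 / (p2 * c1 + 1)" and g2: "g2 = p2 * c2"
  shows "p2 = g2 / c2" "p1 = g1 * (g2 / c2 + 1 / c1)" "g1 \<ge> 0" "g2 \<ge> 0"
proof -
  have "c2 \<noteq> 0" using c2 by simp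
  thus p2e: "p2 = g2 / c2" using g2 by simp
  have d: "p2 * c1 + 1 > 0" using p c1 by (simp add: add_nonneg_pos)
  have "g1 * (p2 * c1 + 1) = p1 * c1" using g1 d by simp
  hence "p1 = g1 * (p2 * c1 + 1) / c1" using c1 by simp
  also have "\<dots> = g1 * (p2 + 1 / c1)" using c1 by (simp add: field_simps)
  finally show "p1 = g1 * (g2 / c2 + 1 / c1)" using p2e by simp
  show "g1 \<ge> 0" using g1 d p c1 by simp
  show "g2 \<ge> 0" using g2 p c2 by simp
qed

theorem theorem1:
  fixes h1 h2 :: complex
    and D1 D2 mhat Pmax N1 N2 eps1 eps2 :: real
  assumes "h1 \<noteq> 0" "h2 \<noteq> 0" "cmod h1 \<le> cmod h2"
    and "D1 < D2" "mhat > 0" "Pmax > 0" "N1 > 0" "N2 > 0"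
    and "0 < eps1" "eps1 < 1" "0 < eps2" "eps2 < 1"
    and "Qinv eps1 / sqrt N1 \<le> 2 * sqrt (ln 2) / (4 - sqrt 2)"
    and "Qinv eps2 / sqrt N2 \<le> 2 * sqrt (ln 2) / (4 - sqrt 2)"
    and "\<exists>m1 p1 g1 m2 p2 g2. feasible h1 h2 D1 D2 mhat Pmax N1 N2 eps1 eps2 m1 p1 g1 m2 p2 g2"
  shows "let g1 = Gammak N1 eps1 D1; g2 = Gammak N2 eps2 D2;
             p1 = g1 * g2 / (cmod h2)^2 + g1 / (cmod h1)^2;
             p2 = g2 / (cmod h2)^2
         in feasible h1 h2 D1 D2 mhat Pmax N1 N2 eps1 eps2 D1 p1 g1 D2 p2 g2 \<and>
            (\<forall>m1' p1' g1' m2' p2' g2'.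
               feasible h1 h2 D1 D2 mhat Pmax N1 N2 eps1 eps2 m1' p1' g1' m2' p2' g2' \<longrightarrow>
               D1 * p1 + D2 * p2 \<le> m1' * p1' + m2' * p2')"
proof -
  define c1 where "c1 = (cmod h1)^2"
  define c2 where "c2 = (cmod h2)^2"
  have c1: "c1 > 0" using assms(1) c1_def by simp
  have c2: "c2 > 0" using assms(2) c2_def by simp
  define g1 where "g1 = Gammak N1 eps1 D1"
  define g2 where "g2 = Gammak N2 eps2 D2"
  define p1 where "p1 = g1 * g2 / c2 + g1 / c1"
  define p2 where "p2 = g2 / c2"
  have p1e: "p1 = g1 * (g2 / c2 + 1 / c1)" unfolding p1_def by (simp add: algebra_simps)
  have cmp: "g1 > 0 \<and> g2 > 0 \<and> Fk N1 eps1 D1 g1 = 0 \<and> Fk N2 eps2 D2 g2 = 0 \<and>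
      mhat \<le> D1 \<and> mhat \<le> D2 \<and> p1 + p2 \<le> p1' + p2' \<and> D1 * p1 + D2 * p2 \<le> m1' * p1' + m2' * p2'"
    if F: "feasible h1 h2 D1 D2 mhat Pmax N1 N2 eps1 eps2 m1' p1' g1' m2' p2' g2'" for m1' p1' g1' m2' p2' g2'
  proof -
    note F' = F[unfolded feasible_def, folded c1_def c2_def]
    have pp: "p2' = g2' / c2" "p1' = g1' * (g2' / c2 + 1 / c1)" "g1' \<ge> 0" "g2' \<ge> 0"
      using feas_p[OF c1 c2, of p1' p2' g1' g2'] F' by auto
    have m1: "m1' > 0" using F' assms(5) by linarith
    have m2: "m2' > 0" using F' assms(5) by linarith
    have u1: "g1 > 0 \<and> Fk N1 eps1 D1 g1 = 0 \<and> g1 \<le> g1' \<and> D1 * g1 \<le> m1' * g1'"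
      unfolding g1_def by (rule user[OF assms(7) assms(13) m1]) (use F' pp in auto)
    have u2: "g2 > 0 \<and> Fk N2 eps2 D2 g2 = 0 \<and> g2 \<le> g2' \<and> D2 * g2 \<le> m2' * g2'"
      unfolding g2_def by (rule user[OF assms(8) assms(14) m2]) (use F' pp in auto)
    have q2: "g2 / c2 + 1 / c1 \<le> g2' / c2 + 1 / c1" using u2 c2 by (simp add: divide_right_mono)
    have q2p: "g2 / c2 + 1 / c1 \<ge> 0" using u2 c1 c2 by simp
    have "p1 \<le> p1'" unfolding p1e pp(2) using u1 q2 q2p by (intro mult_mono) auto
    moreover have "p2 \<le> p2'" unfolding p2_def pp(1) using u2 c2 by (simp add: divide_right_mono)
    moreover have "D1 * p1 \<le> m1' * p1'"
    proof -
      have "D1 * p1 = (D1 * g1) * (g2 / c2 + 1 / c1)" unfolding p1e by (simp add: mult_ac)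
      also have "\<dots> \<le> (m1' * g1') * (g2' / c2 + 1 / c1)"
        using u1 q2 q2p m1 pp(3) by (rule_tac mult_mono) auto
      also have "\<dots> = m1' * p1'" unfolding pp(2) by (simp add: mult_ac)
      finally show ?thesis .
    qed
    moreover have "D2 * p2 \<le> m2' * p2'"
    proof -
      have "D2 * p2 = (D2 * g2) / c2" unfolding p2_def by simp
      also have "\<dots> \<le> (m2' * g2') / c2" using u2 c2 by (simp add: divide_right_mono)
      also have "\<dots> = m2' * p2'" unfolding pp(1) by simp
      finally show ?thesis .
    qed
    ultimately show ?thesis using u1 u2 F' by linarith
  qed
  obtain m1' p1' g1' m2' p2' g2' where F: "feasible h1 h2 D1 D2 mhat Pmax N1 N2 eps1 eps2 m1' p1' g1' m2' p2' g2'"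
    using assms(15) by blast
  note F' = F[unfolded feasible_def]
  have C: "g1 > 0 \<and> g2 > 0 \<and> Fk N1 eps1 D1 g1 = 0 \<and> Fk N2 eps2 D2 g2 = 0 \<and>
      mhat \<le> D1 \<and> mhat \<le> D2 \<and> p1 + p2 \<le> p1' + p2'" using cmp[OF F] by blast
  have feas: "feasible h1 h2 D1 D2 mhat Pmax N1 N2 eps1 eps2 D1 p1 g1 D2 p2 g2"
    unfolding feasible_def
  proof (intro conjI)
    show "p1 \<ge> 0" unfolding p1e using C c1 c2 by simp
    show "p2 \<ge> 0" unfolding p2_def using C c2 by simp
    show "p1 + p2 \<le> Pmax" using C F' by linarith
    show "g2 = p2 * (cmod h2)^2" unfolding p2_def c2_def using c2 c2_def by simp
    show "g1 = p1 * (cmod h1)^2 / (p2 * (cmod h1)^2 + 1)"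
    proof -
      have d: "p2 * c1 + 1 > 0" using C c1 c2 p2_def by (simp add: add_nonneg_pos)
      have "p1 * c1 = g1 * (p2 * c1 + 1)" unfolding p1e p2_def using c1 by (simp add: field_simps)
      hence "g1 = p1 * c1 / (p2 * c1 + 1)" using d by simp
      thus ?thesis unfolding c1_def .
    qed
  qed (use C in auto)
  show ?thesis
    unfolding Let_def g1_def[symmetric] g2_def[symmetric] c1_def[symmetric] c2_def[symmetric]
      p1_def[symmetric] p2_def[symmetric]
    using feas cmp by blast
qed

end
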